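(* Let $\eta>0$ and $\phi_{\exp}(y,t)=\exp(\sqrt2\eta y-\eta^2t)$ with $\mathcal D=\mathbb{R}$. For ${\sf CP}(\phi_{\exp},\mathbb{R})$ with $t_0=0$, at any iteration with time variable $t$, the $\epsilon$-quantile regret (for $\epsilon\in(0,1]$) satisfies $$\mathrm{Regret}_\epsilon\le\frac{\eta t}{\sqrt2}+\frac{\log(1/\epsilon)}{\sqrt2\eta}.$$
   Context: Experts game: $N$ experts, constant $B>0$; each round $j$ the player picks $\boldsymbol p_j\in\Delta^{N-1}$, nature reveals $\boldsymbol\ell_j\in\mathbb{R}^N$ with $\max_{i,i'}|\ell_{j,i}-\ell_{j,i'}|\le B$; $\Delta x_{j,i}=\langle\boldsymbol p_j,\boldsymbol\ell_j\rangle-\ell_{j,i}$, $\boldsymbol x_j=\sum_{k\le j}\Delta\boldsymbol x_k$. At iteration $j$, $\mathrm{Regret}_\epsilon=x_{j,(\lfloor N\epsilon\rfloor)}$, the $\lfloor N\epsilon\rfloor$-th largest coordinate of $\boldsymbol x_j$. For potential $\phi$ and interval $\mathcal D$ with projection $\Pi_{\mathcal D}$ (coordinatewise), $\Phi(\boldsymbol x,t)=\sum_i\phi(x_i,t)$. Algorithm ${\sf CP}(\phi,\mathcal D)$ with initial time $t_0$: $\boldsymbol x_0=\boldsymbol0$, $\tilde{\boldsymbol x}_0=\Pi_{\mathcal D}(\boldsymbol x_0)$. For $j=1,2,\dots$: play $p_{j,i}\propto\partial_x\phi(\tilde x_{j-1,i},t_{j-1})$ (arbitrary if all zero); set $\boldsymbol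 x_j=\boldsymbol x_{j-1}+\Delta\boldsymbol x_j$, $\tilde{\boldsymbol x}_j=\Pi_{\mathcal D}(\boldsymbol x_j)$; choose $\Delta t_j\ge0$ with $\Phi(\tilde{\boldsymbol x}_j,t_{j-1}+\Delta t_j)=\Phi(\tilde{\boldsymbol x}_{j-1},t_{j-1})$; set $t_j=t_{j-1}+\Delta t_j$. The time variable at iteration $j$ is $t_j$. *)

theory Defs
  imports "HOL-Analysis.Analysis"
begin

text \<open>Experts are indexed by 0..N-1, rounds by j = 1,2,...;
  vectors are functions nat => real, only coordinates i < N matter.\<close>

definition kth_largest :: "nat \<Rightarrow> (nat \<Rightarrow> real) \<Rightarrow> nat \<Rightarrow> real" where
  "kth_largest N x k = rev (sort (map x [0..<N])) ! (k - 1)"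

definition quantile_regret :: "nat \<Rightarrow> real \<Rightarrow> (nat \<Rightarrow> real) \<Rightarrow> real" where
  "quantile_regret N eps x = kth_largest N x (nat \<lceil>real N * eps\<rceil>)"

definition Pot :: "(real \<Rightarrow> real \<Rightarrow> real) \<Rightarrow> nat \<Rightarrow> (nat \<Rightarrow> real) \<Rightarrow> real \<Rightarrow> real" where
  "Pot \<phi> N x s = (\<Sum>i<N. \<phi> (x i) s)"

text \<open>A run of CP(phi, D) (projection proj onto D applied coordinatewise) with
  initial time t0 against losses l (l j = loss vector of round j, j >= 1):
  p j = played distribution, x j = cumulative regret vector, t j = time variable.\<close>
definition cp_run ::
  "nat \<Rightarrow> real \<Rightarrow> (real \<Rightarrow> real \<Rightarrow> real) \<Rightarrow> (real \<Rightarrow> real) \<Rightarrow> real \<Rightarrow>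
   (nat \<Rightarrow> nat \<Rightarrow> real) \<Rightarrow> (nat \<Rightarrow> nat \<Rightarrow> real) \<Rightarrow> (nat \<Rightarrow> nat \<Rightarrow> real) \<Rightarrow> (nat \<Rightarrow> real) \<Rightarrow> bool"
where
  "cp_run N B \<phi> proj t0 l p x t \<longleftrightarrow>
     x 0 = (\<lambda>i. 0) \<and> t 0 = t0 \<and>
     (\<forall>j. (\<forall>i<N. \<forall>i'<N. \<bar>l (Suc j) i - l (Suc j) i'\<bar> \<le> B) \<and>
          (\<forall>i<N. 0 \<le> p (Suc j) i) \<and> (\<Sum>i<N. p (Suc j) i) = 1 \<and>
          ((\<exists>i<N. deriv (\<lambda>y. \<phi> y (t j)) (proj (x j i)) \<noteq> 0) \<longrightarrow>
             (\<exists>c>0. \<forall>i<N. p (Suc j) i = c * deriv (\<lambda>y. \<phi> y (t j)) (proj (x j i)))) \<and>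
          x (Suc j) = (\<lambda>i. x j i + ((\<Sum>k<N. p (Suc j) k * l (Suc j) k) - l (Suc j) i)) \<and>
          t j \<le> t (Suc j) \<and>
          Pot \<phi> N (\<lambda>i. proj (x (Suc j) i)) (t (Suc j)) = Pot \<phi> N (\<lambda>i. proj (x j i)) (t j))"

definition phi_exp :: "real \<Rightarrow> real \<Rightarrow> real \<Rightarrow> real" where
  "phi_exp \<eta> y s = exp (sqrt 2 * \<eta> * y - \<eta>\<^sup>2 * s)"

end

theory Submission
  imports Defs
begin

lemma sum_sorted_ge:
  fixes f :: "real \<Rightarrow> real" and ys :: "real list"
  assumes "sorted ys" "mono f" "\<And>y. f y \<ge> 0" "1 \<le> k" "k \<le> length ys"
  shows "real k * f (ys ! (length ys - k)) \<le> sum_list (map f ys)"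
proof -
  let ?n = "length ys"
  have "sum_list (map f ys) = (\<Sum>j<?n. f (ys ! j))"
    by (simp add: sum_list_sum_nth atLeast0LessThan)
  also have "\<dots> \<ge> (\<Sum>j\<in>{?n-k..<?n}. f (ys ! j))"
    by (rule sum_mono2) (auto simp: assms(3))
  also have "(\<Sum>j\<in>{?n-k..<?n}. f (ys ! j)) \<ge> (\<Sum>j\<in>{?n-k..<?n}. f (ys ! (?n - k)))"
  proof (rule sum_mono)
    fix j assume "j \<in> {?n-k..<?n}"
    then have "ys ! (?n - k) \<le> ys ! j" using assms(1) by (auto intro: sorted_nth_mono)
    then show "f (ys ! (?n - k)) \<le> f (ys ! j)" using assms(2) by (simp add: monoD)
  qed
  moreover have "(\<Sum>j\<in>{?n-k..<?n}. f (ys ! (?n - k))) = real k * f (ys ! (?n - k))"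
    using assms by simp
  ultimately show ?thesis by linarith
qed

theorem lemma3p3:
  fixes N :: nat and B \<eta> \<epsilon> :: real
    and l p x :: "nat \<Rightarrow> nat \<Rightarrow> real" and t :: "nat \<Rightarrow> real"
  assumes "0 < N" and "0 < B" and "0 < \<eta>" and "0 < \<epsilon>" and "\<epsilon> \<le> 1"
    and "cp_run N B (phi_exp \<eta>) (\<lambda>y. y) 0 l p x t"
  shows "\<forall>j. quantile_regret N \<epsilon> (x j) \<le> \<eta> * t j / sqrt 2 + ln (1 / \<epsilon>) / (sqrt 2 * \<eta>)"
proof
  fix j
  have inv: "Pot (phi_exp \<eta>) N (x j) (t j) = real N" for j
  proof (induction j)
    case 0
    then show ?case using assms(6) by (simp add: cp_run_def Pot_def phi_exp_def)
  next
    case (Suc j)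
    then show ?case using assms(6) unfolding cp_run_def by metis
  qed
  define k where "k = nat \<lceil>real N * \<epsilon>\<rceil>"
  have Ne: "0 < real N * \<epsilon>" using assms by simp
  have k1: "1 \<le> k" using Ne unfolding k_def by linarith
  have kN: "k \<le> N"
  proof -
    have "real N * \<epsilon> \<le> real N" using assms by (simp add: mult_left_le)
    then have "\<lceil>real N * \<epsilon>\<rceil> \<le> int N" by (simp add: ceiling_le_iff)
    then show ?thesis unfolding k_def by linarith
  qed
  have kge: "real N * \<epsilon> \<le> real k" unfolding k_def using Ne by linarith
  define ys where "ys = sort (map (x j) [0..<N])"
  have lys: "length ys = N" by (simp add: ys_def)
  define v where "v = ys ! (N - k)"
  have qv: "quantile_regret N \<epsilon> (x j) = v"
    unfolding quantile_regret_def kth_largest_def k_def[symmetric] v_def ys_def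
    using k1 kN by (simp add: rev_nth)
  define f where "f = (\<lambda>y. phi_exp \<eta> y (t j))"
  have mf: "mono f" unfolding f_def phi_exp_def mono_def using assms(3)
    by (auto intro!: mult_left_mono)
  have "sum_list (map f ys) = sum_list (map f (map (x j) [0..<N]))"
    unfolding ys_def by (metis mset_map mset_sort sum_mset_sum_list)
  also have "\<dots> = Pot (phi_exp \<eta>) N (x j) (t j)"
    by (simp add: Pot_def f_def sum_list_sum_nth atLeast0LessThan)
  finally have "sum_list (map f ys) = real N" using inv by simp
  then have "real k * f v \<le> real N"
    using sum_sorted_ge[of ys f k] mf k1 kN lys unfolding v_def ys_def
    by (simp add: f_def phi_exp_def)
  then have "real N * \<epsilon> * f v \<le> real N"
    using kge by (smt (verit) f_def mult_right_mono exp_gt_zero phi_exp_def)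
  then have "\<epsilon> * f v \<le> 1" using assms(1) by (simp add: mult.assoc)
  then have "ln (\<epsilon> * f v) \<le> 0" using assms(4) by (simp add: f_def phi_exp_def)
  then have "ln \<epsilon> + (sqrt 2 * \<eta> * v - \<eta>\<^sup>2 * t j) \<le> 0"
    using assms(4) by (simp add: f_def phi_exp_def ln_mult)
  then have "sqrt 2 * \<eta> * v \<le> \<eta>\<^sup>2 * t j + ln (1/\<epsilon>)"
    using assms(4) by (simp add: ln_div)
  then have "v \<le> (\<eta>\<^sup>2 * t j + ln (1/\<epsilon>)) / (sqrt 2 * \<eta>)"
    using assms(3) by (simp add: pos_le_divide_eq mult.commute mult.left_commute)
  also have "\<dots> = \<eta> * t j / sqrt 2 + ln (1 / \<epsilon>) / (sqrt 2 * \<eta>)"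
    using assms(3) by (simp add: field_simps power2_eq_square)
  finally show "quantile_regret N \<epsilon> (x j) \<le> \<eta> * t j / sqrt 2 + ln (1 / \<epsilon>) / (sqrt 2 * \<eta>)"
    using qv by simp
qed

end
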